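(* Let $1/4<a\le1/3$ and $m\ge6$ be an integer. For $\theta\in(2\pi/3,\pi)$ with $1-4a\cos^2\theta\neq0$ define \[ \zeta(\theta)=\frac{(2a-1)\cos\theta+\sqrt{(1-4a)\cos^2\theta+a}}{1-4a\cos^2\theta},\qquad g_m(\theta)=\frac{(\zeta(\theta)-\cos\theta)\sin((m+1)\theta)}{\sin\theta}-\cos((m+1)\theta)+\frac{1}{\zeta(\theta)^{m+1}}. \] Then there exists $h\in\mathbb{N}$ with $\lfloor 2(m+1)/3\rfloor+1\le h-1<h\le m+1$ such that \[ \theta_{h-1}:=\frac{h-1}{m+1}\pi<\cos^{-1}\!\left(-\frac{1}{2\sqrt a}\right)\le\frac{h}{m+1}\pi=:\theta_h. \] Furthermore, provided $\cos^{-1}\!\left(-\frac{1}{2\sqrt a}\right)\neq\frac{h}{m+1}\pi$, the function $g_m$ has at least two zeros in the open interval $J_h=\left(\frac{h-1}{m+1}\pi,\frac{h}{m+1}\pi\right)$ whenever $h\le m$, and at least one zero in $J_h$ when $h=m+1$.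
   Context: Here $\cos^{-1}$ takes values in $[0,\pi]$. The functions $\zeta$ and $g_m$ are real-valued on their domain and have a vertical asymptote at $\theta=\cos^{-1}(-1/(2\sqrt a))$, where $1-4a\cos^2\theta=0$; zeros of $g_m$ are counted at points of $J_h$ where $g_m$ is defined. *)

theory Defs
  imports Complex_Main
begin

definition zeta :: "real \<Rightarrow> real \<Rightarrow> real" where
  "zeta a \<theta> = ((2*a - 1) * cos \<theta> + sqrt ((1 - 4*a) * (cos \<theta>)\<^sup>2 + a))
                 / (1 - 4*a*(cos \<theta>)\<^sup>2)"

definition g :: "nat \<Rightarrow> real \<Rightarrow> real \<Rightarrow> real" where
  "g m a \<theta> = (zeta a \<theta> - cos \<theta>) * sin ((real m + 1) * \<theta>) / sin \<theta>
               - cos ((real m + 1) * \<theta>) + 1 / (zeta a \<theta>) ^ (m + 1)"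

definition g_dom :: "real \<Rightarrow> real \<Rightarrow> bool" where
  "g_dom a \<theta> \<longleftrightarrow> 2*pi/3 < \<theta> \<and> \<theta> < pi \<and> 1 - 4*a*(cos \<theta>)\<^sup>2 \<noteq> 0 \<and> zeta a \<theta> \<noteq> 0"

end

theory Submission
  imports Defs
begin

lemma N_pos: assumes "1/4 < a" "a \<le> 1/3" "c < 0" "-1 \<le> c"
  shows "0 < (2*a-1)*c + sqrt ((1-4*a)*c^2 + a)"
proof -
  have "0 < (2*a-1)*c" using assms by (simp add: mult_neg_neg)
  have "c^2 \<le> 1" using assms by (simp add: abs_square_le_1)
  hence "(4*a-1)*c^2 \<le> (4*a-1)" using assms mult_left_le[of "c^2" "4*a-1"] by simp
  hence "0 \<le> (1-4*a)*c^2 + a" using assms by (simp add: algebra_simps)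
  hence "0 \<le> sqrt ((1-4*a)*c^2 + a)" by simp
  thus ?thesis using \<open>0 < (2*a-1)*c\<close> by linarith
qed

lemma zeta_gt1: assumes "1/4 < a" "a \<le> 1/3" "c < -1/2" "0 < 1 - 4*a*c^2"
  shows "1 - 4*a*c^2 < (2*a-1)*c + sqrt ((1-4*a)*c^2 + a)"
proof -
  define D where "D = 1 - 4*a*c^2"
  define S where "S = (1-4*a)*c^2 + a"
  define R where "R = D - (2*a-1)*c"
  define f where "f = D - 2*(2*a-1)*c - a"
  have f: "f = (c+1/2)*(2 - 2*a - 4*a*c)" unfolding f_def D_def by algebra
  have "0 < a" using assms by simp
  have "0 < a*(-c)" by (rule mult_pos_pos) (use assms \<open>0<a\<close> in auto)
  hence "0 < 2 - 2*a - 4*a*c" using assms by linarith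
  hence fneg: "f < 0" using f assms by (simp add: mult_neg_pos)
  have id: "S - R^2 = - D * f" unfolding S_def R_def D_def f_def by algebra
  have "0 < D * (-f)" by (rule mult_pos_pos) (use fneg assms(4) D_def in auto)
  hence "0 < - D * f" by simp
  hence "R^2 < S" using id by linarith
  hence "sqrt (R^2) < sqrt S" using real_sqrt_less_mono by blast
  hence "\<bar>R\<bar> < sqrt S" by simp
  hence "R < sqrt S" by linarith
  thus ?thesis unfolding R_def D_def S_def by linarith
qed

lemma zeta_ltm1: assumes "1/4 < a" "a \<le> 1/3" "-1 < c" "c < 0" "1 - 4*a*c^2 < 0"
  shows "-(1 - 4*a*c^2) < (2*a-1)*c + sqrt ((1-4*a)*c^2 + a)"
proof -
  define D where "D = 1 - 4*a*c^2"
  define S where "S = (1-4*a)*c^2 + a"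
  define R where "R = - D - (2*a-1)*c"
  define f where "f = D + 2*(2*a-1)*c - a"
  have f: "f = (c+1)*(8*a - 2 - 4*a*c) + (3 - 9*a)" unfolding f_def D_def by algebra
  have "0 < a" using assms by simp
  have "0 < a*(-c)" by (rule mult_pos_pos) (use assms \<open>0<a\<close> in auto)
  hence X: "0 < 8*a - 2 - 4*a*c" using assms by linarith
  have "0 < (c+1)*(8*a - 2 - 4*a*c)" using X assms by simp
  hence fpos: "0 < f" using f assms by linarith
  have id: "S - R^2 = - D * f" unfolding S_def R_def D_def f_def by algebra
  have "0 < (-D) * f" by (rule mult_pos_pos) (use fpos assms(5) D_def in auto)
  hence "0 < - D * f" by simp
  hence "R^2 < S" using id by linarith
  hence "sqrt (R^2) < sqrt S" using real_sqrt_less_mono by blast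
  hence "\<bar>R\<bar> < sqrt S" by simp
  hence "R < sqrt S" by linarith
  thus ?thesis unfolding R_def D_def S_def by linarith
qed

lemma distr3: "(D::real)*(X - u + Y) = D*X - u*D + D*Y" by (simp add: algebra_simps)

lemma H_eq:
  fixes D N s t c :: real
  assumes "D \<noteq> 0" "N \<noteq> 0"
  shows "(N - c*D)*s/t - u*D + D*(D/N)^(m+1) = D * ((N/D - c)*s/t - u + 1/(N/D)^(m+1))"
proof -
  have "1/(N/D)^(m+1) = (D/N)^(m+1)" by (simp add: power_divide)
  moreover have "D*((N/D - c)*s/t) = (N - c*D)*s/t"
  proof -
    have e: "D*(N/D - c) = N - c*D" using assms by (simp add: field_simps)
    have "D*((N/D - c)*s/t) = (D*(N/D - c))*s/t" by (simp add: mult.assoc)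
    thus ?thesis using e by simp
  qed
  ultimately have e12: "1/(N/D)^(m+1) = (D/N)^(m+1)" "D*((N/D - c)*s/t) = (N - c*D)*s/t" by blast+
  have "D * ((N/D - c)*s/t - u + 1/(N/D)^(m+1)) = D*((N/D - c)*s/t) - u*D + D*(1/(N/D)^(m+1))"
    using distr3[of D "(N/D - c)*s/t" u "1/(N/D)^(m+1)"] .
  also have "\<dots> = (N - c*D)*s/t - u*D + D*(D/N)^(m+1)" by (simp only: e12)
  finally show ?thesis by (rule sym)
qed

lemma small_pow: fixes D N :: real assumes "0 < N" "\<bar>D\<bar> < N" "D \<noteq> 0"
  shows "\<bar>D*(D/N)^(m+1)\<bar> < \<bar>D\<bar>"
proof -
  define x where "x = \<bar>D\<bar>/N"
  have x0: "0 < x" unfolding x_def using assms by simp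
  have x1: "x < 1" unfolding x_def using assms by (simp add: divide_less_eq)
  have ax: "\<bar>D/N\<bar> = x" unfolding x_def using assms(1) by (simp add: abs_divide)
  have p: "x^(Suc m) < 1" using power_Suc_less_one[OF x0 x1] .
  have dpos: "0 < \<bar>D\<bar>" using assms by simp
  have "\<bar>D\<bar> * x^(Suc m) < \<bar>D\<bar> * 1" using mult_strict_left_mono[OF p dpos] .
  moreover have "\<bar>D*(D/N)^(m+1)\<bar> = \<bar>D\<bar> * x^(Suc m)" by (simp only: abs_mult power_abs ax Suc_eq_plus1)
  ultimately show ?thesis by simp
qed

lemma cos_neg: "pi/2 < x \<Longrightarrow> x \<le> pi \<Longrightarrow> cos x < 0"
  using cos_monotone_0_pi[of "pi/2" x] by simp

theorem lemma2p6:
  fixes a :: real and m :: nat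
  assumes "1/4 < a" and "a \<le> 1/3" and "m \<ge> 6"
  shows "\<exists>h::nat.
     \<lfloor>2 * (real m + 1) / 3\<rfloor> + 1 \<le> int h - 1 \<and> int h - 1 < int h \<and> h \<le> m + 1 \<and>
     (real h - 1) / (real m + 1) * pi < arccos (- 1 / (2 * sqrt a)) \<and>
     arccos (- 1 / (2 * sqrt a)) \<le> real h / (real m + 1) * pi \<and>
     (arccos (- 1 / (2 * sqrt a)) \<noteq> real h / (real m + 1) * pi \<longrightarrow>
        (h \<le> m \<longrightarrow>
           (\<exists>x y. x \<noteq> y \<and>
              x \<in> {(real h - 1) / (real m + 1) * pi <..< real h / (real m + 1) * pi} \<and>
              y \<in> {(real h - 1) / (real m + 1) * pi <..< real h / (real m + 1) * pi} \<and>
              g_dom a x \<and> g_dom a y \<and> g m a x = 0 \<and> g m a y = 0)) \<and>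
        (h = m + 1 \<longrightarrow>
           (\<exists>x. x \<in> {(real h - 1) / (real m + 1) * pi <..< real h / (real m + 1) * pi} \<and>
              g_dom a x \<and> g m a x = 0)))"
proof -
  have apos: "0 < a" using assms(1) by simp
  define M where "M = real m + 1"
  have M7: "7 \<le> M" using assms(3) M_def by simp
  define yv where "yv = - 1 / (2 * sqrt a)"
  define al where "al = arccos yv"
  have sa: "1/2 < sqrt a"
  proof -
    have "sqrt (1/4) < sqrt a" using assms(1) by (simp only: real_sqrt_less_iff)
    moreover have "sqrt (1/4::real) = 1/2" by (simp add: real_sqrt_divide)
    ultimately show ?thesis by simp
  qed
  have yv1: "-1 < yv" "yv < 0"
  proof -
    have p: "0 < 2*sqrt a" using sa apos by simp
    have "1/(2*sqrt a) < 1" using sa p by (simp add: divide_less_eq)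
    thus "-1 < yv" unfolding yv_def by simp
    show "yv < 0" unfolding yv_def using p by simp
  qed
  have cal: "cos al = yv" unfolding al_def using yv1 by simp
  have yy: "4*a*yv^2 = 1"
  proof -
    have "yv^2 = 1/(4*(sqrt a)^2)" unfolding yv_def by (simp add: power_divide power_mult_distrib)
    also have "(sqrt a)^2 = a" using apos by simp
    finally show ?thesis using apos by simp
  qed
  have alb: "0 < al" "al < pi" unfolding al_def using arccos_lt_bounded[of yv] yv1 by auto
  have al56: "5*pi/6 \<le> al"
  proof (rule ccontr)
    assume "\<not> 5*pi/6 \<le> al"
    hence "cos (5*pi/6) < cos al" using cos_monotone_0_pi[of al "5*pi/6"] alb by simp
    moreover have "cos (5*pi/6) = - sqrt 3 / 2"
    proof -
      have e: "5*pi/6 = pi - pi/6" by simp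
      have "cos (pi - pi/6) = - sqrt 3/2" by (simp only: cos_pi_minus cos_30)
      thus ?thesis by (simp only: e)
    qed
    moreover have "yv \<le> - sqrt 3 / 2"
    proof -
      have "sqrt 3 * sqrt a \<le> 1"
      proof -
        have "sqrt 3 * sqrt a = sqrt (3*a)" by (simp add: real_sqrt_mult)
        also have "\<dots> \<le> sqrt 1" using assms(2) real_sqrt_le_mono[of "3*a" 1] by simp
        finally show ?thesis by simp
      qed
      have p: "0 < 2*sqrt a" using sa apos by simp
      have "sqrt 3/2 * (2*sqrt a) \<le> 1" using \<open>sqrt 3 * sqrt a \<le> 1\<close> by simp
      hence "sqrt 3/2 \<le> 1/(2*sqrt a)" using p by (simp add: pos_le_divide_eq)
      thus ?thesis unfolding yv_def by simp
    qed
    ultimately show False using cal by simp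
  qed
  define h where "h = nat \<lceil>al*M/pi\<rceil>"
  have Mpos: "0 < M" using M7 by simp
  have q0: "0 < al*M/pi" using alb Mpos by simp
  have hreal: "real h = of_int \<lceil>al*M/pi\<rceil>" unfolding h_def using q0 by simp
  have h1: "real h - 1 < al*M/pi" "al*M/pi \<le> real h" using hreal
    by (simp_all add: ceiling_correct)
  have hle: "h \<le> m + 1"
  proof -
    have "al*M/pi < M" using alb Mpos by (simp add: field_simps)
    hence "real h < M + 1" using h1 by linarith
    thus ?thesis unfolding M_def by linarith
  qed
  have hge: "5*M/6 \<le> real h"
  proof -
    have "5*M/6 \<le> al*M/pi" using al56 Mpos by (simp add: field_simps)
    thus ?thesis using h1 by linarith
  qed
  have P1: "\<lfloor>2 * (real m + 1) / 3\<rfloor> + 1 \<le> int h - 1"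
  proof -
    have "2*M/3 < real h - 1" using hge M7 by linarith
    hence "\<lfloor>2*M/3\<rfloor> < int h - 1" by (simp add: floor_less_iff)
    thus ?thesis unfolding M_def by linarith
  qed
  have P2: "(real h - 1) / (real m + 1) * pi < al"
    using h1(1) Mpos unfolding M_def[symmetric] by (simp add: field_simps)
  have P3: "al \<le> real h / (real m + 1) * pi"
    using h1(2) Mpos unfolding M_def[symmetric] by (simp add: field_simps)
  have hpos: "1 \<le> h" using hge M7 by simp
  then obtain k where hk: "h = Suc k" by (cases h) auto
  have rk: "real h - 1 = real k" using hk by simp
  define tk where "tk = (real h - 1) / (real m + 1) * pi"
  define th where "th = real h / (real m + 1) * pi"
  have Mtk: "M * tk = real k * pi" unfolding tk_def rk M_def[symmetric] using Mpos by simp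
  have Mth: "M * th = real h * pi" unfolding th_def M_def[symmetric] using Mpos by simp
  have tk23: "2*pi/3 < tk"
  proof -
    have "2*M/3 < real k" using hge M7 rk by linarith
    hence a1: "2*M/3*pi < real k * pi" by simp
    have "2*pi/3 * M = 2*M/3*pi" by simp
    hence a2: "2*pi/3 * M < real k * pi" using a1 by linarith
    have tk_eq: "tk = real k * pi / M" using Mtk Mpos by (simp add: field_simps)
    show ?thesis unfolding tk_eq using a2 Mpos by (simp add: pos_less_divide_eq)
  qed
  have tkal: "tk < al" using P2 unfolding tk_def by simp
  have alth: "al \<le> th" using P3 unfolding th_def by simp
  have thpi: "th \<le> pi"
  proof -
    have "real h \<le> M" using hle M_def by simp
    hence "real h / M \<le> 1" using Mpos by (simp add: pos_divide_le_eq)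
    hence "real h / M * pi \<le> 1 * pi" using mult_right_mono[of "real h / M" 1 pi] by simp
    thus ?thesis unfolding th_def M_def[symmetric] by simp
  qed
  have al_eq: "arccos (- 1 / (2 * sqrt a)) = al" unfolding al_def yv_def ..
  define D where "D = (\<lambda>t::real. 1 - 4*a*(cos t)\<^sup>2)"
  define N where "N = (\<lambda>t::real. (2*a - 1) * cos t + sqrt ((1 - 4*a) * (cos t)\<^sup>2 + a))"
  define H where "H = (\<lambda>t::real. (N t - cos t * D t) * sin (M * t) / sin t - cos (M * t) * D t
                        + D t * (D t / N t)^(m+1))"
  define \<sigma> where "\<sigma> = ((-1::real)^k)"
  have sig2: "\<sigma> * \<sigma> = 1" unfolding \<sigma>_def by (simp add: power_mult_distrib[symmetric])
  have sigabs: "\<bar>\<sigma>\<bar> = 1" unfolding \<sigma>_def by simp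
  have sigle: "\<And>X. \<sigma> * X \<le> \<bar>X\<bar>"
  proof -
    fix X :: real
    have "\<sigma> * X \<le> \<bar>\<sigma> * X\<bar>" by simp
    thus "\<sigma> * X \<le> \<bar>X\<bar>" using sigabs by (simp add: abs_mult)
  qed
  have Npos: "\<And>t. pi/2 < t \<Longrightarrow> t \<le> pi \<Longrightarrow> 0 < N t"
    unfolding N_def using N_pos assms cos_neg cos_ge_minus_one by simp
  have gH: "\<And>t. pi/2 < t \<Longrightarrow> t \<le> pi \<Longrightarrow> D t \<noteq> 0 \<Longrightarrow> H t = D t * g m a t"
  proof -
    fix t :: real assume t: "pi/2 < t" "t \<le> pi" "D t \<noteq> 0"
    have z: "zeta a t = N t / D t" unfolding zeta_def N_def D_def by simp
    have Nt: "N t \<noteq> 0" using Npos[OF t(1) t(2)] by simp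
    have "H t = D t * ((N t / D t - cos t) * sin (M * t) / sin t - cos (M * t) + 1 / (N t / D t)^(m+1))"
      unfolding H_def using H_eq[OF t(3) Nt, of "cos t" "sin (M * t)" "sin t" "cos (M * t)" m] .
    thus "H t = D t * g m a t" unfolding g_def z M_def .
  qed
  have zero_ok: "\<And>t. 2*pi/3 < t \<Longrightarrow> t < pi \<Longrightarrow> D t \<noteq> 0 \<Longrightarrow> H t = 0 \<Longrightarrow> g_dom a t \<and> g m a t = 0"
  proof -
    fix t :: real assume t: "2*pi/3 < t" "t < pi" "D t \<noteq> 0" "H t = 0"
    have t2: "pi/2 < t" using t(1) pi_gt_zero by linarith
    have z: "zeta a t = N t / D t" unfolding zeta_def N_def D_def by simp
    have "zeta a t \<noteq> 0" using z Npos[of t] t t2 by simp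
    moreover have "g m a t = 0" using gH[of t] t t2 by simp
    ultimately show "g_dom a t \<and> g m a t = 0" unfolding g_dom_def using t D_def by simp
  qed
  have cont: "\<And>l r. pi/2 < l \<Longrightarrow> r < pi \<Longrightarrow> continuous_on {l..r} (\<lambda>t. \<sigma> * H t)"
  proof -
    fix l r :: real assume lr: "pi/2 < l" "r < pi"
    have ne: "\<And>t. t\<in>{l..r} \<Longrightarrow> N t \<noteq> 0 \<and> sin t \<noteq> 0"
    proof -
      fix t assume "t \<in> {l..r}"
      hence t: "pi/2 < t" "t < pi" using lr by auto
      have "0 < sin t" using t pi_gt_zero by (intro sin_gt_zero) linarith+
      thus "N t \<noteq> 0 \<and> sin t \<noteq> 0" using Npos[of t] t by simp
    qed
    have cN: "continuous_on {l..r} N" unfolding N_def by (intro continuous_intros)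
    have cD: "continuous_on {l..r} D" unfolding D_def by (intro continuous_intros)
    show "continuous_on {l..r} (\<lambda>t. \<sigma> * H t)" unfolding H_def
      by (intro continuous_intros cN cD) (use ne in auto)
  qed
  have Dal: "D al = 0" unfolding D_def using cal yy by simp
  have al2: "pi/2 < al" using tk23 tkal pi_gt_zero by linarith
  have tk2: "pi/2 < tk" using tk23 pi_gt_zero by linarith
  have c23: "\<And>t. 2*pi/3 < t \<Longrightarrow> t \<le> pi \<Longrightarrow> cos t < -1/2"
    using cos_monotone_0_pi[of "2*pi/3"] cos_120 by fastforce
  have ctk: "yv < cos tk" "cos tk < 0" using cos_monotone_0_pi[of tk al] tkal tk2 alb cal cos_neg[of tk]
    by (auto simp: less_imp_le)
  have Dtk: "0 < D tk"
  proof -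
    have "(- cos tk)^2 < (- yv)^2" using ctk by (intro power_strict_mono) auto
    hence "4*a*(cos tk)^2 < 4*a*yv^2" using apos by simp
    thus ?thesis unfolding D_def using yy by simp
  qed
  have NDtk: "D tk < N tk" unfolding D_def N_def
    using zeta_gt1[OF assms(1,2) c23[OF tk23] ] Dtk tk2 alb tkal D_def by simp
  have Htk: "\<sigma> * H tk < 0"
  proof -
    have "\<sigma> * H tk = - D tk + \<sigma> * (D tk * (D tk / N tk)^(m+1))"
      unfolding H_def using Mtk sig2 \<sigma>_def by (simp add: algebra_simps)
    moreover have "\<sigma> * (D tk * (D tk / N tk)^(m+1)) < D tk"
      using sigle[of "D tk * (D tk / N tk)^(m+1)"] small_pow[of "N tk" "D tk" m] NDtk Dtk by simp
    ultimately show ?thesis by simp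
  qed
  have IMP: "al \<noteq> th \<Longrightarrow> (h \<le> m \<longrightarrow> (\<exists>x y. x \<noteq> y \<and> x \<in> {tk<..<th} \<and> y \<in> {tk<..<th} \<and>
              g_dom a x \<and> g_dom a y \<and> g m a x = 0 \<and> g m a y = 0)) \<and>
        (h = m + 1 \<longrightarrow> (\<exists>x. x \<in> {tk<..<th} \<and> g_dom a x \<and> g m a x = 0))"
  proof -
    assume ne: "al \<noteq> th"
    hence alth': "al < th" using alth by simp
    have Hal: "0 < \<sigma> * H al"
    proof -
      define u where "u = M*al - real k * pi"
      have "real k * pi < M * al"
      proof -
        have "M*tk < M*al" using tkal Mpos by simp
        thus ?thesis using Mtk by simp
      qed
      hence u0: "0 < u" unfolding u_def by simp
      have "M * al < real h * pi"
      proof -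
        have "M*al < M*th" using alth' Mpos by simp
        thus ?thesis using Mth by simp
      qed
      hence u1: "u < pi" unfolding u_def using hk by (simp add: algebra_simps)
      have su: "0 < sin u" using sin_gt_zero[OF u0 u1] .
      have "sin (M*al) = sin (u + real k * pi)" unfolding u_def by simp
      also have "\<dots> = sin u * \<sigma>" unfolding \<sigma>_def by (simp add: sin_add)
      finally have sM: "\<sigma> * sin (M*al) = sin u" using sig2 by (simp add: algebra_simps)
      have sal: "0 < sin al" using alb by (intro sin_gt_zero) auto
      have "\<sigma> * H al = N al * (\<sigma> * sin (M*al)) / sin al" unfolding H_def Dal by simp
      also have "\<dots> = N al * sin u / sin al" using sM by simp
      finally show ?thesis using Npos[of al] al2 alb su sal by simp
    qed
    obtain x where x: "tk \<le> x" "x \<le> al" "\<sigma> * H x = 0"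
      using IVT'[of "\<lambda>t. \<sigma> * H t" tk 0 al] Htk Hal tkal cont[OF tk2 alb(2)] by auto
    have xtk: "tk < x" using x Htk by (cases "x = tk") auto
    have xal: "x < al" using x Hal by (cases "x = al") auto
    have Dx: "0 < D x"
    proof -
      have "yv < cos x" using cos_monotone_0_pi[of x al] xal xtk tk2 alb cal by simp
      moreover have "cos x < 0" using cos_neg[of x] xtk tk2 xal alb by simp
      ultimately have "(- cos x)^2 < (- yv)^2" by (intro power_strict_mono) auto
      hence "4*a*(cos x)^2 < 4*a*yv^2" using apos by simp
      thus ?thesis unfolding D_def using yy by simp
    qed
    have Hx: "H x = 0" using x(3) sig2 by (metis mult_eq_0_iff one_neq_zero mult_zero_left)
    have gx: "g_dom a x \<and> g m a x = 0" using zero_ok[of x] xtk tk23 xal alb Dx Hx by simp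
    have xin: "x \<in> {tk<..<th}" using xtk xal alth' by simp
    show ?thesis
    proof (intro conjI impI)
      show "\<exists>x. x \<in> {tk<..<th} \<and> g_dom a x \<and> g m a x = 0" using xin gx by blast
    next
      assume hm: "h \<le> m"
      have thpi': "th < pi"
      proof -
        have "real h < M" using hm M_def by simp
        hence "real h / M < 1" using Mpos by (simp add: pos_divide_less_eq)
        hence "real h / M * pi < 1 * pi" using mult_strict_right_mono[of "real h / M" 1 pi] by simp
        thus ?thesis unfolding th_def M_def[symmetric] by simp
      qed
      have th2: "pi/2 < th" using al2 alth' by simp
      have cth: "cos th < yv" "cos th < 0" "-1 < cos th"
        using cos_monotone_0_pi[of al th] cos_monotone_0_pi[of th pi] alth' thpi' alb cal cos_neg[of th] th2
        by auto
      have Dth: "D th < 0"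
      proof -
        have "(- yv)^2 < (- cos th)^2" using cth yv1 by (intro power_strict_mono) auto
        hence "4*a*yv^2 < 4*a*(cos th)^2" using apos by simp
        thus ?thesis unfolding D_def using yy by simp
      qed
      have NDth: "- D th < N th" unfolding D_def N_def
        using zeta_ltm1[OF assms(1,2) cth(3) cth(2)] Dth D_def by simp
      have Hth: "\<sigma> * H th < 0"
      proof -
        have "cos (M*th) = (-1)^h" unfolding Mth by (rule cos_npi)
        also have "\<dots> = - \<sigma>" unfolding hk \<sigma>_def by simp
        finally have cM: "cos (M*th) = - \<sigma>" .
        have sM: "sin (M*th) = 0" using Mth by simp
        have "\<sigma> * H th = D th + \<sigma> * (D th * (D th / N th)^(m+1))"
          unfolding H_def using cM sM sig2 by (simp add: algebra_simps)
        moreover have "\<sigma> * (D th * (D th / N th)^(m+1)) < - D th"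
          using sigle[of "D th * (D th / N th)^(m+1)"] small_pow[of "N th" "D th" m] NDth Dth by simp
        ultimately show ?thesis by simp
      qed
      obtain y where y: "al \<le> y" "y \<le> th" "\<sigma> * H y = 0"
        using IVT2'[of "\<lambda>t. \<sigma> * H t" th 0 al] Hth Hal alth' cont[OF al2 thpi'] by auto
      have yal: "al < y" using y Hal by (cases "y = al") auto
      have yth: "y < th" using y Hth by (cases "y = th") auto
      have Dy: "D y < 0"
      proof -
        have "cos y < yv" using cos_monotone_0_pi[of al y] yal yth thpi' alb cal by simp
        hence "(- yv)^2 < (- cos y)^2" using yv1 by (intro power_strict_mono) auto
        hence "4*a*yv^2 < 4*a*(cos y)^2" using apos by simp
        thus ?thesis unfolding D_def using yy by simp
      qed
      have Hy: "H y = 0" using y(3) sig2 by (metis mult_eq_0_iff one_neq_zero mult_zero_left)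
      have gy: "g_dom a y \<and> g m a y = 0" using zero_ok[of y] yal yth thpi' tk23 tkal Dy Hy by simp
      have yin: "y \<in> {tk<..<th}" using yal yth tkal by simp
      have "x \<noteq> y" using xal yal by simp
      thus "\<exists>x y. x \<noteq> y \<and> x \<in> {tk<..<th} \<and> y \<in> {tk<..<th} \<and>
              g_dom a x \<and> g_dom a y \<and> g m a x = 0 \<and> g m a y = 0" using xin yin gx gy by blast
    qed
  qed
  have ii: "int h - 1 < int h" by simp
  show ?thesis
    unfolding al_eq
    apply (rule exI[of _ h])
    using P1 ii hle P2 P3 IMP[unfolded tk_def th_def] by blast
qed

end
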